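(* Assume $\mathcal S$ and $\mathcal A$ are finite. For $\sigma>0$ let $\pi^*_\sigma$ be an optimal policy of $\mathcal M_\sigma$ (every action in $\mathrm{supp}(\pi^*_\sigma(\cdot\mid s))$ maximizes $Q^*_\sigma(s,\cdot)$, the optimal $Q$-function of $\mathcal M_\sigma$). Then for every $\epsilon>0$ there exists $\sigma'>0$ such that for all $0<\sigma<\sigma'$, all $s\in\mathcal S$ and all $a'\in\mathrm{supp}(\pi^*_\sigma(\cdot\mid s))$, $$\min_{a\in\mathrm{supp}(p_D(\cdot\mid s))}\|a'-a\|_2^2<\epsilon .$$
   Context: Setting: finite state space $\mathcal S$, finite action space $\mathcal A\subset\mathbb R^n$, discount $\gamma\in(0,1)$, reward $R(s,a)$. Dataset distribution $p_D$: action distributions $p_D(a\mid s)$ with support $\mathrm{supp}(p_D(\cdot\mid s))\subseteq\mathcal A$ (the dataset actions at $s$) and transitions $p_D(s'\mid s,a)$. A noise distribution $q_\sigma(\cdot\mid a)$ ($a\in\mathcal A$, $\sigma>0$) is a probability mass function positive on $\mathcal A$ satisfying: for all $a,a_1,a_2\in\mathcal A$, if $\|a_1-a\|_2^2>\|a_2-a\|_2^2$ then $q_\sigma(a\mid a_1)/q_\sigma(a\mid a_2)\to0$ as $\sigma\to0^+$, and if equal then the ratio $\to1$. For $\sigma>0$, $\mathcal M_\sigma=(\mathcal S,\mathcal A,R_\sigma,P_\sigma,\gamma)$ is the Noisy Action MDP with $p_D(a'\mid s,a,\sigma)=q_\sigma(a'\mid a)p_D(a\mid s)/\sum_b q_\sigma(a'\mid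 b)p_D(b\mid s)$, $P_\sigma(s'\mid s,a')=\sum_a p_D(s'\mid s,a)p_D(a'\mid s,a,\sigma)$, $R_\sigma(s,a')=\sum_a p_D(a'\mid s,a,\sigma)(R(s,a)-\|a-a'\|_2^2)$. *)

theory Defs
  imports "HOL-Analysis.Analysis"
begin

text \<open>Actions live in a finite set A of real^'n (Euclidean n-space, norm is the 2-norm).
  States form the finite type 's.
  pD s a      : dataset action distribution p_D(a | s)
  pT s a s'   : dataset transition p_D(s' | s, a)
  q sigma a' a : noise distribution q_sigma(a' | a)\<close>

definition noisy_post ::
  "(real \<Rightarrow> real^'n \<Rightarrow> real^'n \<Rightarrow> real) \<Rightarrow> ('s \<Rightarrow> real^'n \<Rightarrow> real) \<Rightarrow> (real^'n) set
   \<Rightarrow> real \<Rightarrow> 's \<Rightarrow> real^'n \<Rightarrow> real^'n \<Rightarrow> real" where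
  "noisy_post q pD A \<sigma> s a a' =
     q \<sigma> a' a * pD s a / (\<Sum>b\<in>A. q \<sigma> a' b * pD s b)"

definition noisy_P ::
  "(real \<Rightarrow> real^'n \<Rightarrow> real^'n \<Rightarrow> real) \<Rightarrow> ('s \<Rightarrow> real^'n \<Rightarrow> real)
   \<Rightarrow> ('s \<Rightarrow> real^'n \<Rightarrow> 's \<Rightarrow> real) \<Rightarrow> (real^'n) set
   \<Rightarrow> real \<Rightarrow> 's \<Rightarrow> real^'n \<Rightarrow> 's \<Rightarrow> real" where
  "noisy_P q pD pT A \<sigma> s a' s' = (\<Sum>a\<in>A. pT s a s' * noisy_post q pD A \<sigma> s a a')"

definition noisy_R ::
  "(real \<Rightarrow> real^'n \<Rightarrow> real^'n \<Rightarrow> real) \<Rightarrow> ('s \<Rightarrow> real^'n \<Rightarrow> real)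
   \<Rightarrow> ('s \<Rightarrow> real^'n \<Rightarrow> real) \<Rightarrow> (real^'n) set
   \<Rightarrow> real \<Rightarrow> 's \<Rightarrow> real^'n \<Rightarrow> real" where
  "noisy_R q pD R A \<sigma> s a' =
     (\<Sum>a\<in>A. noisy_post q pD A \<sigma> s a a' * (R s a - (norm (a - a'))\<^sup>2))"

definition is_optimal_Q ::
  "(real^'n) set \<Rightarrow> ('s::finite \<Rightarrow> real^'n \<Rightarrow> real) \<Rightarrow> ('s \<Rightarrow> real^'n \<Rightarrow> 's \<Rightarrow> real) \<Rightarrow> real
   \<Rightarrow> ('s \<Rightarrow> real^'n \<Rightarrow> real) \<Rightarrow> bool" where
  "is_optimal_Q A Rm P \<gamma> Q \<longleftrightarrow>
     (\<forall>s a. a \<in> A \<longrightarrow> Q s a = Rm s a + \<gamma> * (\<Sum>s'\<in>UNIV. P s a s' * Max (Q s' ` A))) \<and>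
     (\<forall>s a. a \<notin> A \<longrightarrow> Q s a = 0)"

definition optimal_Q ::
  "(real^'n) set \<Rightarrow> ('s::finite \<Rightarrow> real^'n \<Rightarrow> real) \<Rightarrow> ('s \<Rightarrow> real^'n \<Rightarrow> 's \<Rightarrow> real) \<Rightarrow> real
   \<Rightarrow> 's \<Rightarrow> real^'n \<Rightarrow> real" where
  "optimal_Q A Rm P \<gamma> = (THE Q. is_optimal_Q A Rm P \<gamma> Q)"

definition noisy_Qstar ::
  "(real \<Rightarrow> real^'n \<Rightarrow> real^'n \<Rightarrow> real) \<Rightarrow> ('s::finite \<Rightarrow> real^'n \<Rightarrow> real)
   \<Rightarrow> ('s \<Rightarrow> real^'n \<Rightarrow> 's \<Rightarrow> real) \<Rightarrow> ('s \<Rightarrow> real^'n \<Rightarrow> real) \<Rightarrow> (real^'n) set \<Rightarrow> real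
   \<Rightarrow> real \<Rightarrow> 's \<Rightarrow> real^'n \<Rightarrow> real" where
  "noisy_Qstar q pD pT R A \<gamma> \<sigma> =
     optimal_Q A (noisy_R q pD R A \<sigma>) (noisy_P q pD pT A \<sigma>) \<gamma>"

end

theory Submission imports Defs begin

lemma Max_diff_le:
  fixes f g :: "'a \<Rightarrow> real"
  assumes "finite A" "A \<noteq> {}" "\<And>a. a\<in>A \<Longrightarrow> \<bar>f a - g a\<bar> \<le> c"
  shows "\<bar>Max (f ` A) - Max (g ` A)\<bar> \<le> c"
proof -
  have "Max (f ` A) \<in> f ` A" "Max (g ` A) \<in> g ` A" using assms(1,2) by simp_all
  then obtain a1 a2 where a1: "a1 \<in> A" "f a1 = Max (f ` A)" and a2: "a2 \<in> A" "g a2 = Max (g ` A)"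
    by (metis imageE)
  have "g a1 \<le> Max (g ` A)" using a1(1) assms(1) by auto
  moreover have "f a2 \<le> Max (f ` A)" using a2(1) assms(1) by auto
  moreover have "\<bar>f a1 - g a1\<bar> \<le> c" "\<bar>f a2 - g a2\<bar> \<le> c" using assms(3) a1(1) a2(1) by blast+
  ultimately show ?thesis using a1 a2 by linarith
qed

locale fmdp =
  fixes A :: "(real^'n) set" and Rm :: "'s::finite \<Rightarrow> real^'n \<Rightarrow> real"
    and P :: "'s \<Rightarrow> real^'n \<Rightarrow> 's \<Rightarrow> real" and \<gamma> :: real
  assumes finA: "finite A" and neA: "A \<noteq> {}" and g0: "0 \<le> \<gamma>" and g1: "\<gamma> < 1"
    and Pnn: "\<And>s a s'. a \<in> A \<Longrightarrow> P s a s' \<ge> 0"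
    and Psum: "\<And>s a. a \<in> A \<Longrightarrow> (\<Sum>s'\<in>UNIV. P s a s') = 1"
begin

definition T :: "real^'s \<Rightarrow> real^'s" where
  "T v = (\<chi> s. Max ((\<lambda>a. Rm s a + \<gamma> * (\<Sum>s'\<in>UNIV. P s a s' * v$s')) ` A))"

definition sd :: "real^'s \<Rightarrow> real^'s \<Rightarrow> real" where
  "sd v w = Max (range (\<lambda>s. \<bar>v$s - w$s\<bar>))"

lemma sd_ge: "\<bar>v$s - w$s\<bar> \<le> sd v w"
  unfolding sd_def by (rule Max_ge) auto

lemma sd_le: "(\<And>s. \<bar>v$s - w$s\<bar> \<le> c) \<Longrightarrow> sd v w \<le> c"
  unfolding sd_def by (subst Max_le_iff) auto

lemma sum_P_diff:
  assumes "a \<in> A" "\<And>s'. \<bar>f s' - g s'\<bar> \<le> c"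
  shows "\<bar>(\<Sum>s'\<in>UNIV. P s a s' * f s') - (\<Sum>s'\<in>UNIV. P s a s' * g s')\<bar> \<le> c"
proof -
  have "\<bar>(\<Sum>s'\<in>UNIV. P s a s' * f s') - (\<Sum>s'\<in>UNIV. P s a s' * g s')\<bar>
      = \<bar>\<Sum>s'\<in>UNIV. P s a s' * (f s' - g s')\<bar>"
    by (simp add: sum_subtractf right_diff_distrib)
  also have "\<dots> \<le> (\<Sum>s'\<in>UNIV. \<bar>P s a s' * (f s' - g s')\<bar>)" by (rule sum_abs)
  also have "\<dots> \<le> (\<Sum>s'\<in>UNIV. P s a s' * c)"
    by (rule sum_mono) (simp add: abs_mult Pnn[OF assms(1)] assms(2) mult_left_mono)
  also have "\<dots> = c" using Psum[OF assms(1)] by (simp add: sum_distrib_right[symmetric])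
  finally show ?thesis .
qed

lemma T_contr: "sd (T v) (T w) \<le> \<gamma> * sd v w"
proof (rule sd_le)
  fix s
  show "\<bar>T v $ s - T w $ s\<bar> \<le> \<gamma> * sd v w"
    unfolding T_def vec_lambda_beta
  proof (rule Max_diff_le[OF finA neA])
    fix a assume a: "a \<in> A"
    have "\<bar>(\<Sum>s'\<in>UNIV. P s a s' * v$s') - (\<Sum>s'\<in>UNIV. P s a s' * w$s')\<bar> \<le> sd v w"
      by (rule sum_P_diff[OF a sd_ge])
    then have "\<gamma> * \<bar>(\<Sum>s'\<in>UNIV. P s a s' * v$s') - (\<Sum>s'\<in>UNIV. P s a s' * w$s')\<bar> \<le> \<gamma> * sd v w"
      using g0 by (simp add: mult_left_mono)
    then show "\<bar>Rm s a + \<gamma> * (\<Sum>s'\<in>UNIV. P s a s' * v$s') - (Rm s a + \<gamma> * (\<Sum>s'\<in>UNIV. P s a s' * w$s'))\<bar> \<le> \<gamma> * sd v w"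
      using g0 by (simp add: right_diff_distrib[symmetric] abs_mult)
  qed
qed

lemma Tk_contr: "sd ((T^^k) v) ((T^^k) w) \<le> \<gamma>^k * sd v w"
proof (induction k)
  case 0 then show ?case by simp
next
  case (Suc k)
  have "sd ((T^^Suc k) v) ((T^^Suc k) w) \<le> \<gamma> * sd ((T^^k) v) ((T^^k) w)"
    using T_contr by simp
  also have "\<dots> \<le> \<gamma> * (\<gamma>^k * sd v w)" using Suc g0 by (rule mult_left_mono)
  finally show ?case by simp
qed

lemma dist_sd: "dist v w \<le> real CARD('s) * sd v w"
proof -
  have "dist v w = norm (v - w)" by (simp add: dist_norm)
  also have "\<dots> \<le> (\<Sum>i\<in>UNIV. \<bar>(v - w)$i\<bar>)" by (rule norm_le_l1_cart)
  also have "\<dots> \<le> (\<Sum>i\<in>(UNIV::'s set). sd v w)" by (rule sum_mono) (metis sd_ge vector_minus_component)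
  finally show ?thesis by simp
qed

lemma sd_dist: "sd v w \<le> dist v w"
  by (rule sd_le) (metis component_le_norm_cart dist_norm vector_minus_component)

lemma T_fix: "\<exists>x. T x = x"
proof -
  have "(\<lambda>k. \<gamma>^k) \<longlonglongrightarrow> 0" using g0 g1 by (intro LIMSEQ_power_zero) auto
  then have "eventually (\<lambda>k. \<gamma>^k < 1 / real CARD('s)) sequentially"
    by (rule order_tendstoD) simp
  then obtain k where k: "\<gamma>^k < 1 / real CARD('s)" by (auto simp: eventually_sequentially)
  define c where "c = real CARD('s) * \<gamma>^k"
  have c0: "0 \<le> c" using g0 by (simp add: c_def)
  have c1: "c < 1" using k by (simp add: c_def field_simps)
  have "\<forall>x y. dist ((T^^k) x) ((T^^k) y) \<le> c * dist x y"
  proof (intro allI)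
    fix x y
    have "dist ((T^^k) x) ((T^^k) y) \<le> real CARD('s) * sd ((T^^k) x) ((T^^k) y)" by (rule dist_sd)
    also have "\<dots> \<le> real CARD('s) * (\<gamma>^k * sd x y)" by (intro mult_left_mono Tk_contr) simp
    also have "\<dots> \<le> real CARD('s) * (\<gamma>^k * dist x y)"
      using g0 by (intro mult_left_mono sd_dist) auto
    finally show "dist ((T^^k) x) ((T^^k) y) \<le> c * dist x y" by (simp add: c_def)
  qed
  from banach_fix_type[OF c0 c1 this] obtain x where x: "(T^^k) x = x" and u: "\<And>y. (T^^k) y = y \<Longrightarrow> y = x"
    by metis
  have "(T^^k) (T x) = T x" by (metis x funpow_swap1)
  then have "T x = x" by (rule u)
  then show ?thesis by blast
qed

lemma Q_exists: "\<exists>Q. is_optimal_Q A Rm P \<gamma> Q"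
proof -
  obtain x where x: "T x = x" using T_fix by blast
  define Q where "Q s a = (if a \<in> A then Rm s a + \<gamma> * (\<Sum>s'\<in>UNIV. P s a s' * x$s') else 0)" for s a
  have V: "Max (Q s' ` A) = x $ s'" for s'
  proof -
    have "Q s' ` A = (\<lambda>a. Rm s' a + \<gamma> * (\<Sum>s''\<in>UNIV. P s' a s'' * x$s'')) ` A"
      by (rule image_cong) (auto simp: Q_def)
    then have "Max (Q s' ` A) = T x $ s'" by (simp add: T_def)
    then show ?thesis using x by simp
  qed
  have "is_optimal_Q A Rm P \<gamma> Q" unfolding is_optimal_Q_def V by (simp add: Q_def)
  then show ?thesis by blast
qed

lemma Max_abs_le:
  fixes f :: "'a \<Rightarrow> real"
  assumes "finite B" "B \<noteq> {}" "\<And>a. a \<in> B \<Longrightarrow> \<bar>f a\<bar> \<le> c"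
  shows "\<bar>Max (f ` B)\<bar> \<le> c"
proof -
  have "\<bar>Max (f ` B) - Max ((\<lambda>_. 0::real) ` B)\<bar> \<le> c"
    by (rule Max_diff_le) (use assms in auto)
  moreover have "(\<lambda>_. 0::real) ` B = {0}" using assms(2) by auto
  then have "Max ((\<lambda>_. 0::real) ` B) = 0" by simp
  ultimately show ?thesis by simp
qed

lemma Q_unique:
  assumes "is_optimal_Q A Rm P \<gamma> Q1" "is_optimal_Q A Rm P \<gamma> Q2"
  shows "Q1 = Q2"
proof -
  define M where "M = Max ((\<lambda>(s,a). \<bar>Q1 s a - Q2 s a\<bar>) ` (UNIV \<times> A))"
  have fin: "finite ((UNIV::'s set) \<times> A)" using finA by (intro finite_cartesian_product) auto
  have ne: "(UNIV::'s set) \<times> A \<noteq> {}" using neA by simp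
  have Mge: "\<bar>Q1 s a - Q2 s a\<bar> \<le> M" if "a \<in> A" for s a
  proof -
    have sa: "(s,a) \<in> (UNIV::'s set) \<times> A" using that by simp
    show ?thesis unfolding M_def by (rule Max_ge[OF finite_imageI[OF fin]], rule rev_image_eqI[OF sa]) simp
  qed
  have bnd: "\<bar>Q1 s a - Q2 s a\<bar> \<le> \<gamma> * M" if a: "a \<in> A" for s a
  proof -
    have "\<bar>Max (Q1 s' ` A) - Max (Q2 s' ` A)\<bar> \<le> M" for s'
      by (rule Max_diff_le[OF finA neA Mge])
    then have "\<bar>(\<Sum>s'\<in>UNIV. P s a s' * Max (Q1 s' ` A)) - (\<Sum>s'\<in>UNIV. P s a s' * Max (Q2 s' ` A))\<bar> \<le> M"
      by (rule sum_P_diff[OF a])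
    then have "\<gamma> * \<bar>(\<Sum>s'\<in>UNIV. P s a s' * Max (Q1 s' ` A)) - (\<Sum>s'\<in>UNIV. P s a s' * Max (Q2 s' ` A))\<bar> \<le> \<gamma> * M"
      using g0 by (simp add: mult_left_mono)
    moreover have "Q1 s a - Q2 s a = \<gamma> * ((\<Sum>s'\<in>UNIV. P s a s' * Max (Q1 s' ` A)) - (\<Sum>s'\<in>UNIV. P s a s' * Max (Q2 s' ` A)))"
      using assms a unfolding is_optimal_Q_def by (simp add: right_diff_distrib)
    ultimately show ?thesis using g0 by (simp add: abs_mult)
  qed
  have "M \<in> (\<lambda>(s,a). \<bar>Q1 s a - Q2 s a\<bar>) ` (UNIV \<times> A)"
    unfolding M_def using fin ne by simp
  then obtain s0 a0 where sa0: "a0 \<in> A" "M = \<bar>Q1 s0 a0 - Q2 s0 a0\<bar>" by auto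
  have "M \<le> \<gamma> * M" using bnd[OF sa0(1), of s0] sa0(2) by simp
  then have "(1 - \<gamma>) * M \<le> 0" by (simp add: algebra_simps)
  then have M0: "M \<le> 0" using g1 by (simp add: mult_le_0_iff)
  show ?thesis
  proof (intro ext)
    fix s a show "Q1 s a = Q2 s a"
    proof (cases "a \<in> A")
      case True then show ?thesis using Mge[OF True, of s] M0 by simp
    next
      case False then show ?thesis using assms unfolding is_optimal_Q_def by simp
    qed
  qed
qed

lemma optimal_Q_is: "is_optimal_Q A Rm P \<gamma> (optimal_Q A Rm P \<gamma>)"
proof -
  have "\<exists>!Q. is_optimal_Q A Rm P \<gamma> Q" using Q_exists Q_unique by blast
  then show ?thesis unfolding optimal_Q_def by (rule theI')
qed

lemma Q_bound:
  assumes "is_optimal_Q A Rm P \<gamma> Q" "\<And>s a. a \<in> A \<Longrightarrow> \<bar>Rm s a\<bar> \<le> Rb"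
  shows "\<bar>Max (Q s ` A)\<bar> \<le> Rb / (1 - \<gamma>)"
proof -
  define M where "M = Max ((\<lambda>(s,a). \<bar>Q s a\<bar>) ` (UNIV \<times> A))"
  have fin: "finite ((UNIV::'s set) \<times> A)" using finA by (intro finite_cartesian_product) auto
  have ne: "(UNIV::'s set) \<times> A \<noteq> {}" using neA by simp
  have Mge: "\<bar>Q s a\<bar> \<le> M" if "a \<in> A" for s a
  proof -
    have sa: "(s,a) \<in> (UNIV::'s set) \<times> A" using that by simp
    show ?thesis unfolding M_def by (rule Max_ge[OF finite_imageI[OF fin]], rule rev_image_eqI[OF sa]) simp
  qed
  have V: "\<bar>Max (Q s' ` A)\<bar> \<le> M" for s'
    by (rule Max_abs_le[OF finA neA Mge])
  have bnd: "\<bar>Q s a\<bar> \<le> Rb + \<gamma> * M" if a: "a \<in> A" for s a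
  proof -
    have "\<bar>(\<Sum>s'\<in>UNIV. P s a s' * Max (Q s' ` A)) - (\<Sum>s'\<in>UNIV. P s a s' * 0)\<bar> \<le> M"
      by (rule sum_P_diff[OF a]) (simp add: V)
    then have "\<gamma> * \<bar>(\<Sum>s'\<in>UNIV. P s a s' * Max (Q s' ` A))\<bar> \<le> \<gamma> * M"
      using g0 by (simp add: mult_left_mono)
    moreover have "Q s a = Rm s a + \<gamma> * (\<Sum>s'\<in>UNIV. P s a s' * Max (Q s' ` A))"
      using assms a unfolding is_optimal_Q_def by simp
    moreover have "\<bar>Rm s a\<bar> \<le> Rb" using assms(2) a .
    ultimately show ?thesis using g0
      abs_triangle_ineq[of "Rm s a" "\<gamma> * (\<Sum>s'\<in>UNIV. P s a s' * Max (Q s' ` A))"]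
      by (simp add: abs_mult)
  qed
  have "M \<in> (\<lambda>(s,a). \<bar>Q s a\<bar>) ` (UNIV \<times> A)"
    unfolding M_def using fin ne by simp
  then obtain s0 a0 where "a0 \<in> A" "M = \<bar>Q s0 a0\<bar>" by auto
  then have "M \<le> Rb + \<gamma> * M" using bnd[of a0 s0] by simp
  then have "M * (1 - \<gamma>) \<le> Rb" by (simp add: algebra_simps)
  then have "M \<le> Rb / (1 - \<gamma>)" using g1 by (simp add: field_simps)
  then show ?thesis using V[of s] by linarith
qed

end
theorem mainTheorem7:
  fixes A :: "(real^'n) set"
    and pD :: "'s::finite \<Rightarrow> real^'n \<Rightarrow> real"
    and pT :: "'s \<Rightarrow> real^'n \<Rightarrow> 's \<Rightarrow> real"
    and R :: "'s \<Rightarrow> real^'n \<Rightarrow> real"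
    and q :: "real \<Rightarrow> real^'n \<Rightarrow> real^'n \<Rightarrow> real"
    and \<gamma> :: real
    and \<pi> :: "real \<Rightarrow> 's \<Rightarrow> real^'n \<Rightarrow> real"
  assumes finA: "finite A" and neA: "A \<noteq> {}"
    and gamma: "0 < \<gamma>" "\<gamma> < 1"
    and pD_nonneg: "\<And>s a. pD s a \<ge> 0"
    and pD_supp: "\<And>s a. pD s a > 0 \<Longrightarrow> a \<in> A"
    and pD_sum: "\<And>s. (\<Sum>a\<in>A. pD s a) = 1"
    and pT_nonneg: "\<And>s a s'. pT s a s' \<ge> 0"
    and pT_sum: "\<And>s a. pD s a > 0 \<Longrightarrow> (\<Sum>s'\<in>UNIV. pT s a s') = 1"
    and q_pos: "\<And>\<sigma> a a'. \<sigma> > 0 \<Longrightarrow> a \<in> A \<Longrightarrow> a' \<in> A \<Longrightarrow> q \<sigma> a' a > 0"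
    and q_zero: "\<And>\<sigma> a a'. \<sigma> > 0 \<Longrightarrow> a \<in> A \<Longrightarrow> a' \<notin> A \<Longrightarrow> q \<sigma> a' a = 0"
    and q_sum: "\<And>\<sigma> a. \<sigma> > 0 \<Longrightarrow> a \<in> A \<Longrightarrow> (\<Sum>a'\<in>A. q \<sigma> a' a) = 1"
    and q_lt: "\<And>a a1 a2. a \<in> A \<Longrightarrow> a1 \<in> A \<Longrightarrow> a2 \<in> A \<Longrightarrow>
                 (norm (a1 - a))\<^sup>2 > (norm (a2 - a))\<^sup>2 \<Longrightarrow>
                 ((\<lambda>\<sigma>. q \<sigma> a a1 / q \<sigma> a a2) \<longlongrightarrow> 0) (at_right 0)"
    and q_eq: "\<And>a a1 a2. a \<in> A \<Longrightarrow> a1 \<in> A \<Longrightarrow> a2 \<in> A \<Longrightarrow>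
                 (norm (a1 - a))\<^sup>2 = (norm (a2 - a))\<^sup>2 \<Longrightarrow>
                 ((\<lambda>\<sigma>. q \<sigma> a a1 / q \<sigma> a a2) \<longlongrightarrow> 1) (at_right 0)"
    and pi_nonneg: "\<And>\<sigma> s a. \<sigma> > 0 \<Longrightarrow> \<pi> \<sigma> s a \<ge> 0"
    and pi_supp: "\<And>\<sigma> s a. \<sigma> > 0 \<Longrightarrow> \<pi> \<sigma> s a > 0 \<Longrightarrow> a \<in> A"
    and pi_sum: "\<And>\<sigma> s. \<sigma> > 0 \<Longrightarrow> (\<Sum>a\<in>A. \<pi> \<sigma> s a) = 1"
    and pi_opt: "\<And>\<sigma> s a' b. \<sigma> > 0 \<Longrightarrow> \<pi> \<sigma> s a' > 0 \<Longrightarrow> b \<in> A \<Longrightarrow>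
                 noisy_Qstar q pD pT R A \<gamma> \<sigma> s b \<le> noisy_Qstar q pD pT R A \<gamma> \<sigma> s a'"
  shows "\<forall>\<epsilon>>0. \<exists>\<sigma>'>0. \<forall>\<sigma>. 0 < \<sigma> \<and> \<sigma> < \<sigma>' \<longrightarrow>
           (\<forall>s a'. \<pi> \<sigma> s a' > 0 \<longrightarrow>
              Min ((\<lambda>a. (norm (a' - a))\<^sup>2) ` {a. pD s a > 0}) < \<epsilon>)"
proof -
  define post where "post \<sigma> s a a' = noisy_post q pD A \<sigma> s a a'" for \<sigma> s a a'
  define Ds where "Ds s = {a. pD s a > 0}" for s
  have Ds_sub: "Ds s \<subseteq> A" for s using pD_supp by (auto simp: Ds_def)
  have Ds_fin: "finite (Ds s)" for s using Ds_sub finA by (rule finite_subset)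
  have Ds_ne: "Ds s \<noteq> {}" for s
  proof
    assume "Ds s = {}"
    then have "\<And>a. \<not> pD s a > 0" by (auto simp: Ds_def)
    then have "\<forall>a\<in>A. pD s a = 0" using pD_nonneg by (meson antisym not_less)
    then show False using pD_sum[of s] by simp
  qed
  have den_pos: "(\<Sum>b\<in>A. q \<sigma> a' b * pD s b) > 0" if "\<sigma> > 0" "a' \<in> A" for \<sigma> s a'
  proof -
    obtain b0 where "b0 \<in> Ds s" using Ds_ne by blast
    then have b0: "b0 \<in> A" "pD s b0 > 0" using Ds_sub by (auto simp: Ds_def)
    show ?thesis
    proof (rule sum_pos2[OF finA b0(1)])
      show "0 < q \<sigma> a' b0 * pD s b0" using b0 q_pos[OF that(1) b0(1) that(2)] by simp
      fix i assume iA: "i \<in> A"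
      show "0 \<le> q \<sigma> a' i * pD s i" using q_pos[OF that(1) iA that(2)] pD_nonneg[of s i] by simp
    qed
  qed
  have post_nn: "post \<sigma> s a a' \<ge> 0" if "\<sigma> > 0" "a \<in> A" "a' \<in> A" for \<sigma> s a a'
    unfolding post_def noisy_post_def
    using den_pos[OF that(1,3), of s] q_pos[OF that] pD_nonneg[of s a]
    by (intro divide_nonneg_pos mult_nonneg_nonneg) auto
  have post_zero: "post \<sigma> s a a' = 0" if "\<not> pD s a > 0" for \<sigma> s a a'
  proof -
    have "pD s a = 0" using that pD_nonneg[of s a] by simp
    then show ?thesis by (simp add: post_def noisy_post_def)
  qed
  have post_sum: "(\<Sum>a\<in>A. post \<sigma> s a a') = 1" if "\<sigma> > 0" "a' \<in> A" for \<sigma> s a'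
    unfolding post_def noisy_post_def sum_divide_distrib[symmetric]
    using den_pos[OF that, of s] by simp
  have finSA: "finite ((UNIV::'s set) \<times> A)" using finA by (intro finite_cartesian_product) auto
  define Rb0 where "Rb0 = Max ((\<lambda>(s,a). \<bar>R s a\<bar>) ` ((UNIV::'s set) \<times> A))"
  have Rb0: "\<bar>R s a\<bar> \<le> Rb0" if "a \<in> A" for s a
  proof -
    have sa: "(s,a) \<in> (UNIV::'s set) \<times> A" using that by simp
    show ?thesis unfolding Rb0_def by (rule Max_ge[OF finite_imageI[OF finSA]], rule rev_image_eqI[OF sa]) simp
  qed
  have finAA: "finite (A \<times> A)" using finA by simp
  define D0 where "D0 = Max ((\<lambda>(a,b). (norm (a - b))\<^sup>2) ` (A \<times> A))"
  have D0: "(norm (a - b))\<^sup>2 \<le> D0" if "a \<in> A" "b \<in> A" for a b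
  proof -
    have sa: "(a,b) \<in> A \<times> A" using that by simp
    show ?thesis unfolding D0_def by (rule Max_ge[OF finite_imageI[OF finAA]], rule rev_image_eqI[OF sa]) simp
  qed
  obtain a00 where a00: "a00 \<in> A" using neA by blast
  have Rb0_nn: "Rb0 \<ge> 0" using Rb0[OF a00] by (meson abs_ge_zero order_trans)
  have D0_nn: "D0 \<ge> 0" using D0[OF a00 a00] by simp
  define K where "K = (Rb0 + D0) / (1 - \<gamma>)"
  have K_nn: "K \<ge> 0" using Rb0_nn D0_nn gamma by (simp add: K_def)
  have Rbound: "\<bar>noisy_R q pD R A \<sigma> s a'\<bar> \<le> Rb0 + D0" if "\<sigma> > 0" "a' \<in> A" for \<sigma> s a'
  proof -
    have "\<bar>noisy_R q pD R A \<sigma> s a'\<bar> \<le> (\<Sum>a\<in>A. \<bar>post \<sigma> s a a' * (R s a - (norm (a - a'))\<^sup>2)\<bar>)"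
      unfolding noisy_R_def post_def by (rule sum_abs)
    also have "\<dots> \<le> (\<Sum>a\<in>A. post \<sigma> s a a' * (Rb0 + D0))"
    proof (rule sum_mono)
      fix a assume a: "a \<in> A"
      have "\<bar>R s a - (norm (a - a'))\<^sup>2\<bar> \<le> Rb0 + D0"
        using Rb0[OF a, of s] D0[OF a that(2)] zero_le_power2[of "norm (a - a')"] by (simp only: abs_le_iff) linarith
      then show "\<bar>post \<sigma> s a a' * (R s a - (norm (a - a'))\<^sup>2)\<bar> \<le> post \<sigma> s a a' * (Rb0 + D0)"
        using post_nn[OF that(1) a that(2), of s] by (simp add: abs_mult mult_left_mono)
    qed
    also have "\<dots> = Rb0 + D0" using post_sum[OF that, of s] by (simp add: sum_distrib_right[symmetric])
    finally show ?thesis .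
  qed
  have Pnn: "noisy_P q pD pT A \<sigma> s a' s' \<ge> 0" if "\<sigma> > 0" "a' \<in> A" for \<sigma> s a' s'
    unfolding noisy_P_def post_def[symmetric]
    using post_nn[OF that(1) _ that(2)] pT_nonneg by (intro sum_nonneg mult_nonneg_nonneg) auto
  have Psum: "(\<Sum>s'\<in>UNIV. noisy_P q pD pT A \<sigma> s a' s') = 1" if "\<sigma> > 0" "a' \<in> A" for \<sigma> s a'
  proof -
    have "(\<Sum>s'\<in>UNIV. noisy_P q pD pT A \<sigma> s a' s') = (\<Sum>s'\<in>UNIV. \<Sum>a\<in>A. pT s a s' * post \<sigma> s a a')"
      unfolding noisy_P_def post_def ..
    also have "\<dots> = (\<Sum>a\<in>A. \<Sum>s'\<in>UNIV. pT s a s' * post \<sigma> s a a')" by (rule sum.swap)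
    also have "\<dots> = (\<Sum>a\<in>A. post \<sigma> s a a')"
    proof (rule sum.cong[OF refl])
      fix a assume "a \<in> A"
      show "(\<Sum>s'\<in>UNIV. pT s a s' * post \<sigma> s a a') = post \<sigma> s a a'"
      proof (cases "pD s a > 0")
        case True then show ?thesis using pT_sum[OF True] by (simp add: sum_distrib_right[symmetric])
      next
        case False then show ?thesis using post_zero[OF False] by simp
      qed
    qed
    also have "\<dots> = 1" by (rule post_sum[OF that])
    finally show ?thesis .
  qed
  define Qs where "Qs \<sigma> = noisy_Qstar q pD pT R A \<gamma> \<sigma>" for \<sigma>
  define V where "V \<sigma> s' = Max (Qs \<sigma> s' ` A)" for \<sigma> s'
  define G where "G \<sigma> s a = R s a + \<gamma> * (\<Sum>s'\<in>UNIV. pT s a s' * V \<sigma> s')" for \<sigma> s a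
  have mdp: "fmdp A (noisy_P q pD pT A \<sigma>) \<gamma>" if "\<sigma> > 0" for \<sigma>
    by (rule fmdp.intro) (use finA neA gamma Pnn[OF that] Psum[OF that] in auto)
  have opt: "is_optimal_Q A (noisy_R q pD R A \<sigma>) (noisy_P q pD pT A \<sigma>) \<gamma> (Qs \<sigma>)" if "\<sigma> > 0" for \<sigma>
    unfolding Qs_def noisy_Qstar_def by (rule fmdp.optimal_Q_is[OF mdp[OF that]])
  have Vb: "\<bar>V \<sigma> s'\<bar> \<le> K" if "\<sigma> > 0" for \<sigma> s'
    unfolding V_def K_def by (rule fmdp.Q_bound[OF mdp[OF that] opt[OF that]]) (rule Rbound[OF that])
  have Gb: "\<bar>G \<sigma> s a\<bar> \<le> Rb0 + K" if "\<sigma> > 0" "pD s a > 0" for \<sigma> s a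
  proof -
    have "\<bar>\<Sum>s'\<in>UNIV. pT s a s' * V \<sigma> s'\<bar> \<le> (\<Sum>s'\<in>UNIV. \<bar>pT s a s' * V \<sigma> s'\<bar>)" by (rule sum_abs)
    also have "\<dots> \<le> (\<Sum>s'\<in>UNIV. pT s a s' * K)"
    proof (rule sum_mono)
      fix s' show "\<bar>pT s a s' * V \<sigma> s'\<bar> \<le> pT s a s' * K"
        unfolding abs_mult abs_of_nonneg[OF pT_nonneg] by (rule mult_left_mono[OF Vb[OF that(1)] pT_nonneg])
    qed
    also have "\<dots> = K" using pT_sum[OF that(2)] by (simp add: sum_distrib_right[symmetric])
    finally have h: "\<bar>\<Sum>s'\<in>UNIV. pT s a s' * V \<sigma> s'\<bar> \<le> K" .
    have "\<gamma> * \<bar>\<Sum>s'\<in>UNIV. pT s a s' * V \<sigma> s'\<bar> \<le> 1 * K"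
      by (rule mult_mono) (use gamma K_nn h in auto)
    moreover have "\<bar>R s a\<bar> \<le> Rb0" using Rb0 pD_supp[OF that(2)] by blast
    ultimately show ?thesis unfolding G_def using gamma
      abs_triangle_ineq[of "R s a" "\<gamma> * (\<Sum>s'\<in>UNIV. pT s a s' * V \<sigma> s')"]
      by (simp add: abs_mult)
  qed
  have Qid: "Qs \<sigma> s a' = (\<Sum>a\<in>A. post \<sigma> s a a' * (G \<sigma> s a - (norm (a - a'))\<^sup>2))"
    if "\<sigma> > 0" "a' \<in> A" for \<sigma> s a'
  proof -
    have "Qs \<sigma> s a' = noisy_R q pD R A \<sigma> s a' + \<gamma> * (\<Sum>s'\<in>UNIV. noisy_P q pD pT A \<sigma> s a' s' * V \<sigma> s')"
      using opt[OF that(1)] that(2) unfolding is_optimal_Q_def V_def by simp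
    also have "(\<Sum>s'\<in>UNIV. noisy_P q pD pT A \<sigma> s a' s' * V \<sigma> s')
        = (\<Sum>s'\<in>UNIV. \<Sum>a\<in>A. post \<sigma> s a a' * (pT s a s' * V \<sigma> s'))"
      unfolding noisy_P_def post_def by (simp add: sum_distrib_left sum_distrib_right mult_ac)
    also have "\<dots> = (\<Sum>a\<in>A. \<Sum>s'\<in>UNIV. post \<sigma> s a a' * (pT s a s' * V \<sigma> s'))" by (rule sum.swap)
    also have "\<dots> = (\<Sum>a\<in>A. post \<sigma> s a a' * (\<Sum>s'\<in>UNIV. pT s a s' * V \<sigma> s'))"
      by (simp add: sum_distrib_left)
    also have "noisy_R q pD R A \<sigma> s a' = (\<Sum>a\<in>A. post \<sigma> s a a' * (R s a - (norm (a - a'))\<^sup>2))"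
      unfolding noisy_R_def post_def ..
    also have "(\<Sum>a\<in>A. post \<sigma> s a a' * (R s a - (norm (a - a'))\<^sup>2))
        + \<gamma> * (\<Sum>a\<in>A. post \<sigma> s a a' * (\<Sum>s'\<in>UNIV. pT s a s' * V \<sigma> s'))
        = (\<Sum>a\<in>A. post \<sigma> s a a' * (G \<sigma> s a - (norm (a - a'))\<^sup>2))"
      unfolding G_def by (simp add: sum_distrib_left sum.distrib[symmetric] algebra_simps)
    finally show ?thesis .
  qed
  define Gm where "Gm \<sigma> s = Max (G \<sigma> s ` Ds s)" for \<sigma> s
  define d where "d s a' = Min ((\<lambda>a. (norm (a' - a))\<^sup>2) ` Ds s)" for s a'
  have upper: "Qs \<sigma> s a' \<le> Gm \<sigma> s - d s a'" if "\<sigma> > 0" "a' \<in> A" for \<sigma> s a'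
  proof -
    have "Qs \<sigma> s a' \<le> (\<Sum>a\<in>A. post \<sigma> s a a' * (Gm \<sigma> s - d s a'))"
      unfolding Qid[OF that]
    proof (rule sum_mono)
      fix a assume a: "a \<in> A"
      show "post \<sigma> s a a' * (G \<sigma> s a - (norm (a - a'))\<^sup>2) \<le> post \<sigma> s a a' * (Gm \<sigma> s - d s a')"
      proof (cases "pD s a > 0")
        case True
        then have aD: "a \<in> Ds s" by (simp add: Ds_def)
        have "G \<sigma> s a \<le> Gm \<sigma> s" unfolding Gm_def using aD Ds_fin by simp
        moreover have "d s a' \<le> (norm (a' - a))\<^sup>2" unfolding d_def using aD Ds_fin by simp
        moreover have "(norm (a' - a))\<^sup>2 = (norm (a - a'))\<^sup>2" by (simp add: norm_minus_commute)
        ultimately show ?thesis using post_nn[OF that(1) a that(2), of s]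
          by (intro mult_left_mono) auto
      next
        case False then show ?thesis using post_zero[OF False] by simp
      qed
    qed
    also have "\<dots> = Gm \<sigma> s - d s a'" using post_sum[OF that, of s] by (simp add: sum_distrib_right[symmetric])
    finally show ?thesis .
  qed
  define C where "C = 2 * (Rb0 + K) + D0"
  have C_nn: "C \<ge> 0" using Rb0_nn K_nn D0_nn by (simp add: C_def)
  have lower: "Qs \<sigma> s b \<ge> G \<sigma> s b - real (card A) * \<eta> * C"
    if "\<sigma> > 0" "pD s b > 0" "\<eta> > 0" "\<And>a. a \<in> A \<Longrightarrow> a \<noteq> b \<Longrightarrow> post \<sigma> s a b < \<eta>" for \<sigma> s b \<eta>
  proof -
    have bA: "b \<in> A" using pD_supp[OF that(2)] .
    have "Qs \<sigma> s b - G \<sigma> s b = (\<Sum>a\<in>A. post \<sigma> s a b * (G \<sigma> s a - (norm (a - b))\<^sup>2 - G \<sigma> s b))"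
      unfolding Qid[OF that(1) bA] using post_sum[OF that(1) bA, of s]
      by (simp add: right_diff_distrib sum_subtractf sum_distrib_right[symmetric])
    also have "\<dots> \<ge> (\<Sum>a\<in>A. - (\<eta> * C))"
    proof (rule sum_mono)
      fix a assume a: "a \<in> A"
      show "- (\<eta> * C) \<le> post \<sigma> s a b * (G \<sigma> s a - (norm (a - b))\<^sup>2 - G \<sigma> s b)"
      proof (cases "a = b")
        case True then show ?thesis using that(3) C_nn by simp
      next
        case ab: False
        show ?thesis
        proof (cases "pD s a > 0")
          case False then show ?thesis using post_zero[OF False] that(3) C_nn by simp
        next
          case True
          have "G \<sigma> s a - (norm (a - b))\<^sup>2 - G \<sigma> s b \<ge> - C"
            using Gb[OF that(1) True] Gb[OF that(1) that(2)] D0[OF a bA] unfolding C_def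
            by (simp add: abs_le_iff)
          then have "post \<sigma> s a b * (G \<sigma> s a - (norm (a - b))\<^sup>2 - G \<sigma> s b) \<ge> post \<sigma> s a b * (- C)"
            using post_nn[OF that(1) a bA] by (intro mult_left_mono) auto
          moreover have "post \<sigma> s a b * C \<le> \<eta> * C"
            using that(4)[OF a ab] C_nn by (intro mult_right_mono) auto
          ultimately show ?thesis by simp
        qed
      qed
    qed
    finally show ?thesis by simp
  qed
  have ev: "eventually (\<lambda>\<sigma>. \<forall>s. \<forall>b\<in>A. \<forall>a\<in>A. pD s b > 0 \<longrightarrow> a \<noteq> b \<longrightarrow> post \<sigma> s a b < \<eta>) (at_right 0)"
    if "\<eta> > 0" for \<eta>
  proof (intro eventually_all_finite eventually_ball_finite[OF finA] ballI)
    fix s b a assume bA: "b \<in> A" and a: "a \<in> A"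
    show "eventually (\<lambda>\<sigma>. pD s b > 0 \<longrightarrow> a \<noteq> b \<longrightarrow> post \<sigma> s a b < \<eta>) (at_right 0)"
    proof (cases "pD s b > 0 \<and> a \<noteq> b")
      case False then show ?thesis by simp
    next
      case True
      then have pb: "pD s b > 0" and ab: "a \<noteq> b" by auto
      have "(norm (a - b))\<^sup>2 > (norm (b - b))\<^sup>2" using ab by simp
      from q_lt[OF bA a bA this]
      have "((\<lambda>\<sigma>. q \<sigma> b a / q \<sigma> b b * (pD s a / pD s b)) \<longlongrightarrow> 0) (at_right 0)"
        by (rule tendsto_mult_left_zero)
      then have e1: "eventually (\<lambda>\<sigma>. q \<sigma> b a / q \<sigma> b b * (pD s a / pD s b) < \<eta>) (at_right 0)"
        using that by (rule order_tendstoD)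
      have e2: "eventually (\<lambda>\<sigma>. (0::real) < \<sigma>) (at_right 0)" by (rule eventually_at_right_less)
      show ?thesis
      proof (rule eventually_mono[OF eventually_conj[OF e1 e2]])
        fix \<sigma> assume h: "q \<sigma> b a / q \<sigma> b b * (pD s a / pD s b) < \<eta> \<and> 0 < \<sigma>"
        then have s0: "\<sigma> > 0" by simp
        have qbb: "q \<sigma> b b > 0" using q_pos[OF s0 bA bA] .
        have "q \<sigma> b b * pD s b \<le> (\<Sum>c\<in>A. q \<sigma> b c * pD s c)"
          by (rule member_le_sum[OF bA _ finA]) (use q_pos[OF s0 _ bA] pD_nonneg in \<open>auto intro: mult_nonneg_nonneg less_imp_le\<close>)
        then have "post \<sigma> s a b \<le> q \<sigma> b a * pD s a / (q \<sigma> b b * pD s b)"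
          unfolding post_def noisy_post_def
          using q_pos[OF s0 a bA] pD_nonneg[of s a] qbb pb
          by (intro frac_le) auto
        also have "\<dots> = q \<sigma> b a / q \<sigma> b b * (pD s a / pD s b)" by simp
        finally show "pD s b > 0 \<longrightarrow> a \<noteq> b \<longrightarrow> post \<sigma> s a b < \<eta>" using h by simp
      qed
    qed
  qed
  show ?thesis
  proof (intro allI impI)
    fix \<epsilon> :: real assume e: "\<epsilon> > 0"
    define t where "t = real (card A) * C"
    have t0: "t \<ge> 0" using C_nn by (simp add: t_def)
    define \<eta> where "\<eta> = \<epsilon> / (t + 1)"
    have eta: "\<eta> > 0" using e t0 by (simp add: \<eta>_def)
    have small: "real (card A) * \<eta> * C < \<epsilon>"
    proof -
      have "real (card A) * \<eta> * C = t * \<epsilon> / (t + 1)" by (simp add: t_def \<eta>_def)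
      also have "\<dots> < \<epsilon>" using t0 e by (simp add: field_simps)
      finally show ?thesis .
    qed
    obtain \<sigma>' where s': "\<sigma>' > 0" and P: "\<And>\<sigma>. \<sigma> > 0 \<Longrightarrow> \<sigma> < \<sigma>' \<Longrightarrow>
        \<forall>s. \<forall>b\<in>A. \<forall>a\<in>A. pD s b > 0 \<longrightarrow> a \<noteq> b \<longrightarrow> post \<sigma> s a b < \<eta>"
      using ev[OF eta] unfolding eventually_at_right_field by auto
    show "\<exists>\<sigma>'>0. \<forall>\<sigma>. 0 < \<sigma> \<and> \<sigma> < \<sigma>' \<longrightarrow>
           (\<forall>s a'. \<pi> \<sigma> s a' > 0 \<longrightarrow> Min ((\<lambda>a. (norm (a' - a))\<^sup>2) ` {a. pD s a > 0}) < \<epsilon>)"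
    proof (intro exI[of _ \<sigma>'] conjI allI impI)
      show "\<sigma>' > 0" by (rule s')
    next
      fix \<sigma> s a' assume sg: "0 < \<sigma> \<and> \<sigma> < \<sigma>'" and pa: "\<pi> \<sigma> s a' > 0"
      have s0: "\<sigma> > 0" using sg by simp
      have a'A: "a' \<in> A" using pi_supp[OF s0 pa] .
      have "Gm \<sigma> s \<in> G \<sigma> s ` Ds s" unfolding Gm_def using Ds_fin Ds_ne by simp
      then obtain b where bD: "b \<in> Ds s" and Gbm: "G \<sigma> s b = Gm \<sigma> s" by auto
      have pb: "pD s b > 0" using bD by (simp add: Ds_def)
      have bA: "b \<in> A" using pD_supp[OF pb] .
      have "Qs \<sigma> s b \<ge> G \<sigma> s b - real (card A) * \<eta> * C"
        by (rule lower[OF s0 pb eta]) (use P[of \<sigma>] sg pb bA in auto)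
      moreover have "Qs \<sigma> s b \<le> Qs \<sigma> s a'" unfolding Qs_def by (rule pi_opt[OF s0 pa bA])
      moreover have "Qs \<sigma> s a' \<le> Gm \<sigma> s - d s a'" by (rule upper[OF s0 a'A])
      ultimately have "d s a' < \<epsilon>" using small Gbm by linarith
      then show "Min ((\<lambda>a. (norm (a' - a))\<^sup>2) ` {a. pD s a > 0}) < \<epsilon>" by (simp add: d_def Ds_def)
    qed
  qed
qed

end
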